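(* Let $q\neq-1$ and $r$ be real parameters. Let $t$ be a tiling of an $n$-board with $k$ dominoes and $\ell$ black squares. Write $t$ as a word (read from left to right) in the letters $a$ (white square), $b$ (black square) and $D$ (domino). Let $T$ be the tiling whose word is obtained from that of $t$ by keeping every letter $a$ at its place in the word and writing the remaining letters (the $b$'s and $D$'s) in reverse order. Let $A$ be the tiling of the $n$-board obtained from $T$ by replacing every square (white or black) by a colourless square of weight $1$, and let $B$ be the tiling of the $(n-2k)$-board obtained from $T$ by deleting all dominoes. Then $$w_r(t)=q^{k\ell}\,w_r(A)\,w_r(B).$$
   Context: An $m$-board is a $1\times m$ rectangle with cells numbered $1,\dots,m$, tiled by white squares, black squares (each covering one cell) and dominoes (covering two adjacent cells); in $A$ also colourless squares occur. The weight $w_r$: a white square has weight $x$; a black square at cell $i$ has weight $q^i r x$; a domino covering cells $i-1,i$ has weight $q^{i-1}s$; a colourless square has weight $1$. The weight of a tiling is the product of the weights of its tiles. *)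

theory Defs
  imports Complex_Main
begin

text \<open>Tiles: white square (letter a), black square (letter b), domino (letter D),
  colourless square. A tiling of a board is the word of its tiles read left to right.\<close>
datatype tile = White | Black | Domino | Colourless

fun tile_len :: "tile \<Rightarrow> nat" where
  "tile_len Domino = 2"
| "tile_len _ = 1"

definition cells :: "tile list \<Rightarrow> nat" where
  "cells t = sum_list (map tile_len t)"

text \<open>weight_from q r s x i t: weight of the word t placed so that its first tile
  starts at cell i+1 (i cells already covered).\<close>
fun weight_from :: "real \<Rightarrow> real \<Rightarrow> real \<Rightarrow> real \<Rightarrow> nat \<Rightarrow> tile list \<Rightarrow> real" where
  "weight_from q r s x i [] = 1"
| "weight_from q r s x i (White # ts) = x * weight_from q r s x (i + 1) ts"
| "weight_from q r s x i (Black # ts) = q ^ (i + 1) * r * x * weight_from q r s x (i + 1) ts"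
| "weight_from q r s x i (Domino # ts) = q ^ (i + 1) * s * weight_from q r s x (i + 2) ts"
| "weight_from q r s x i (Colourless # ts) = weight_from q r s x (i + 1) ts"

definition w_r :: "real \<Rightarrow> real \<Rightarrow> real \<Rightarrow> real \<Rightarrow> tile list \<Rightarrow> real" where
  "w_r q r s x t = weight_from q r s x 0 t"

fun fill_nonwhite :: "tile list \<Rightarrow> tile list \<Rightarrow> tile list" where
  "fill_nonwhite [] ys = []"
| "fill_nonwhite (White # xs) ys = White # fill_nonwhite xs ys"
| "fill_nonwhite (c # xs) ys = hd ys # fill_nonwhite xs (tl ys)"

definition reverse_nonwhite :: "tile list \<Rightarrow> tile list" where
  "reverse_nonwhite t = fill_nonwhite t (rev (filter (\<lambda>c. c \<noteq> White) t))"

definition squares_to_colourless :: "tile list \<Rightarrow> tile list" where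
  "squares_to_colourless t = map (\<lambda>c. if c = Domino then Domino else Colourless) t"

definition delete_dominoes :: "tile list \<Rightarrow> tile list" where
  "delete_dominoes t = filter (\<lambda>c. c \<noteq> Domino) t"

end

theory Submission
  imports Defs
begin

fun ex :: "nat \<Rightarrow> tile list \<Rightarrow> nat" where
  "ex i [] = 0"
| "ex i (White # ts) = ex (i+1) ts"
| "ex i (Black # ts) = (i+1) + ex (i+1) ts"
| "ex i (Domino # ts) = (i+1) + ex (i+2) ts"
| "ex i (Colourless # ts) = ex (i+1) ts"

fun ps :: "nat \<Rightarrow> tile list \<Rightarrow> nat" where
  "ps p [] = 0"
| "ps p (White # ts) = ps (p+1) ts"
| "ps p (c # ts) = (p+1) + ps (p+1) ts"

fun G :: "tile list \<Rightarrow> nat" where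
  "G [] = 0"
| "G (x # ws) = (if x = Domino then length ws else 0) + G ws"

fun HB :: "nat \<Rightarrow> tile list \<Rightarrow> nat" where
  "HB d [] = 0"
| "HB d (x # ys) = (if x = Domino then HB (d+1) ys else if x = Black then d + HB d ys else HB d ys)"

fun HD :: "nat \<Rightarrow> tile list \<Rightarrow> nat" where
  "HD d [] = 0"
| "HD d (x # ys) = (if x = Domino then d + HD (d+1) ys else HD d ys)"

lemma weight_closed:
  "weight_from q r s x i t = x ^ (count_list t White + count_list t Black) * r ^ (count_list t Black)
     * s ^ (count_list t Domino) * q ^ (ex i t)"
proof (induction t arbitrary: i)
  case Nil then show ?case by simp
next
  case (Cons c ts) then show ?case
    by (cases c) (simp_all add: power_add algebra_simps)
qed

lemma L1:
  assumes "set t \<subseteq> {White, Black, Domino}"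
  shows "ex (p+d) t = ps p t + d * length (filter (\<lambda>c. c \<noteq> White) t) + G (filter (\<lambda>c. c \<noteq> White) t)"
  using assms
proof (induction t arbitrary: p d)
  case Nil then show ?case by simp
next
  case (Cons c ts)
  then have IH: "\<And>p d. ex (p+d) ts = ps p ts + d * length (filter (\<lambda>c. c \<noteq> White) ts) + G (filter (\<lambda>c. c \<noteq> White) ts)"
    by auto
  show ?case
  proof (cases c)
    case White then show ?thesis using IH[of "p+1" d] by simp
  next
    case Black then show ?thesis using IH[of "p+1" d] by simp
  next
    case Domino then show ?thesis using IH[of "p+1" "d+1"] by simp
  next
    case Colourless then show ?thesis using Cons.prems by simp
  qed
qed

lemma L2:
  assumes "set t \<subseteq> {White, Black, Domino}" and "set ys \<subseteq> {Black, Domino}"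
    and "length ys = length (filter (\<lambda>c. c \<noteq> White) t)"
    and "i = p + d" and "j + d = p"
  shows "ex i (squares_to_colourless (fill_nonwhite t ys)) + ex j (delete_dominoes (fill_nonwhite t ys))
         + HB d ys = ps p t + HD d ys"
  using assms
proof (induction t arbitrary: ys i j p d)
  case Nil then show ?case by (simp add: squares_to_colourless_def delete_dominoes_def)
next
  case (Cons c ts)
  have nw: ?case if cn: "c = Black \<or> c = Domino"
  proof -
    from Cons.prems cn obtain y ys' where ys: "ys = y # ys'" by (cases ys) auto
    have y: "y = Black \<or> y = Domino" using Cons.prems ys by auto
    have fe: "fill_nonwhite (c # ts) ys = y # fill_nonwhite ts ys'" using cn ys by auto
    have pe: "ps p (c # ts) = (p+1) + ps (p+1) ts" using cn by auto
    show ?thesis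
    proof (cases "y = Domino")
      case True
      have h: "ex (i+2) (squares_to_colourless (fill_nonwhite ts ys')) + ex j (delete_dominoes (fill_nonwhite ts ys'))
         + HB (d+1) ys' = ps (p+1) ts + HD (d+1) ys'"
        using Cons.prems cn ys by (intro Cons.IH) auto
      then show ?thesis using True fe pe ys Cons.prems
        by (simp add: squares_to_colourless_def delete_dominoes_def)
    next
      case False
      then have yb: "y = Black" using y by auto
      have h: "ex (i+1) (squares_to_colourless (fill_nonwhite ts ys')) + ex (j+1) (delete_dominoes (fill_nonwhite ts ys'))
         + HB d ys' = ps (p+1) ts + HD d ys'"
        using Cons.prems cn ys by (intro Cons.IH) auto
      then show ?thesis using yb fe pe ys Cons.prems
        by (simp add: squares_to_colourless_def delete_dominoes_def)
    qed
  qed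
  show ?case
  proof (cases c)
    case White
    have h: "ex (i+1) (squares_to_colourless (fill_nonwhite ts ys)) + ex (j+1) (delete_dominoes (fill_nonwhite ts ys))
         + HB d ys = ps (p+1) ts + HD d ys"
      using Cons.prems White by (intro Cons.IH) auto
    then show ?thesis using White
      by (simp add: squares_to_colourless_def delete_dominoes_def)
  next
    case Colourless then show ?thesis using Cons.prems by simp
  next
    case Black then show ?thesis using nw by blast
  next
    case Domino then show ?thesis using nw by blast
  qed
qed

lemma HB_snoc: "HB d (v @ [x]) = HB d v + (if x = Black then d + count_list v Domino else 0)"
  by (induction v arbitrary: d) auto

lemma HD_snoc: "HD d (v @ [x]) = HD d v + (if x = Domino then d + count_list v Domino else 0)"
  by (induction v arbitrary: d) auto

lemma len_BD: "set ws \<subseteq> {Black, Domino} \<Longrightarrow> length ws = count_list ws Domino + count_list ws Black"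
  by (induction ws) auto

lemma L3:
  assumes "set ws \<subseteq> {Black, Domino}"
  shows "G ws + HB 0 (rev ws) = count_list ws Domino * count_list ws Black + HD 0 (rev ws)"
  using assms
proof (induction ws)
  case Nil then show ?case by simp
next
  case (Cons x ws)
  then have IH: "G ws + HB 0 (rev ws) = count_list ws Domino * count_list ws Black + HD 0 (rev ws)"
    and len: "length ws = count_list ws Domino + count_list ws Black"
    and x: "x = Black \<or> x = Domino" using len_BD by auto
  then show ?case
    by (auto simp: HB_snoc HD_snoc algebra_simps)
qed

lemma count_fill_W:
  assumes "set ys \<subseteq> {Black, Domino}" and "length ys = length (filter (\<lambda>c. c \<noteq> White) t)"
  shows "count_list (fill_nonwhite t ys) White = count_list t White"
  using assms
proof (induction t arbitrary: ys)
  case Nil then show ?case by simp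
next
  case (Cons c ts)
  show ?case
  proof (cases "c = White")
    case True then show ?thesis using Cons by simp
  next
    case False
    then obtain z zs where ys: "ys = z # zs" using Cons.prems by (cases ys) auto
    have "count_list (fill_nonwhite (c # ts) ys) White = count_list (fill_nonwhite ts zs) White"
      using False ys Cons.prems by (cases c) auto
    then show ?thesis using Cons.IH[of zs] Cons.prems ys False by auto
  qed
qed

lemma count_fill_NW:
  assumes "length ys = length (filter (\<lambda>c. c \<noteq> White) t)" and "y \<noteq> White"
  shows "count_list (fill_nonwhite t ys) y = count_list ys y"
  using assms
proof (induction t arbitrary: ys)
  case Nil then show ?case by simp
next
  case (Cons c ts)
  show ?case
  proof (cases "c = White")
    case True then show ?thesis using Cons by simp
  next
    case False
    then obtain z zs where ys: "ys = z # zs" using Cons.prems by (cases ys) auto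
    have "count_list (fill_nonwhite (c # ts) ys) y = (if z = y then 1 else 0) + count_list (fill_nonwhite ts zs) y"
      using False ys by (cases c) auto
    then show ?thesis using Cons.IH[of zs] Cons.prems ys False by auto
  qed
qed

lemma count_filter_NW: "y \<noteq> White \<Longrightarrow> count_list (filter (\<lambda>c. c \<noteq> White) t) y = count_list t y"
  by (induction t) auto

lemma count_sq_D: "count_list (squares_to_colourless t) Domino = count_list t Domino"
  by (induction t) (auto simp: squares_to_colourless_def)
lemma count_sq_W: "count_list (squares_to_colourless t) White = 0"
  by (induction t) (auto simp: squares_to_colourless_def)
lemma count_sq_B: "count_list (squares_to_colourless t) Black = 0"
  by (induction t) (auto simp: squares_to_colourless_def)
lemma count_del_D: "count_list (delete_dominoes t) Domino = 0"
  by (induction t) (auto simp: delete_dominoes_def)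
lemma count_del_o: "y \<noteq> Domino \<Longrightarrow> count_list (delete_dominoes t) y = count_list t y"
  by (induction t) (auto simp: delete_dominoes_def)

theorem proposition2p4:
  fixes q r s x :: real and t :: "tile list" and n k l :: nat
  assumes "q \<noteq> -1"
    and "set t \<subseteq> {White, Black, Domino}"
    and "cells t = n"
    and "count_list t Domino = k"
    and "count_list t Black = l"
  shows "w_r q r s x t =
           q ^ (k * l) * w_r q r s x (squares_to_colourless (reverse_nonwhite t))
                       * w_r q r s x (delete_dominoes (reverse_nonwhite t))"
proof -
  define w where "w = filter (\<lambda>c. c \<noteq> White) t"
  define T where "T = fill_nonwhite t (rev w)"
  have TT: "reverse_nonwhite t = T" by (simp add: reverse_nonwhite_def T_def w_def)
  have wset: "set w \<subseteq> {Black, Domino}" using assms(2) by (auto simp: w_def)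
  have rset: "set (rev w) \<subseteq> {Black, Domino}" using wset by simp
  have rlen: "length (rev w) = length (filter (\<lambda>c. c \<noteq> White) t)" by (simp add: w_def)
  have e1: "ex 0 t = ps 0 t + G w" using L1[OF assms(2), of 0 0] by (simp add: w_def)
  have e2: "ex 0 (squares_to_colourless T) + ex 0 (delete_dominoes T) + HB 0 (rev w) = ps 0 t + HD 0 (rev w)"
    using L2[OF assms(2) rset rlen, of 0 0 0 0] by (simp add: T_def)
  have cw: "count_list w Domino = k" "count_list w Black = l"
    using assms(4,5) count_filter_NW by (auto simp: w_def)
  have e3: "G w + HB 0 (rev w) = k * l + HD 0 (rev w)" using L3[OF wset] cw by simp
  have E: "ex 0 t = k * l + ex 0 (squares_to_colourless T) + ex 0 (delete_dominoes T)"
    using e1 e2 e3 by linarith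
  have cTW: "count_list T White = count_list t White" using count_fill_W[OF rset rlen] by (simp add: T_def)
  have cTD: "count_list T Domino = k" using count_fill_NW[OF rlen] cw by (simp add: T_def)
  have cTB: "count_list T Black = l" using count_fill_NW[OF rlen] cw by (simp add: T_def)
  show ?thesis
    unfolding TT w_r_def weight_closed E
    using cTW cTD cTB assms(4,5)
    by (simp add: count_sq_D count_sq_W count_sq_B count_del_D count_del_o power_add algebra_simps)
qed

end
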